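(* Let $\Gamma=(V,E)$ be a directed graph (finite or infinite) in which every vertex has outdegree at most $M<\infty$ and at least one outgoing edge, and let $q>1$. Then there exists a unique vector $\overline{t}=(t_v)_{v\in V}\in[1,M^{1/(q-1)}]^V$ such that $$t_v^q = \sum_{w:\ vw\in E} t_w\qquad\text{for all } v\in V.$$
   Context: $vw\in E$ denotes a directed edge from $v$ to $w$. *)

theory Defs
  imports Complex_Main "HOL-Library.FuncSet"
begin

end

theory Submission
  imports Defs
begin

lemma uniq_le:
  fixes V :: "'a set" and E :: "('a \<times> 'a) set" and q C :: real
  assumes graph: "E \<subseteq> V \<times> V"
    and q: "q > 1"
    and ne: "V \<noteq> {}"
    and tb: "\<And>v. v \<in> V \<Longrightarrow> 1 \<le> t v \<and> t v \<le> C"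
    and sb: "\<And>v. v \<in> V \<Longrightarrow> 1 \<le> s v \<and> s v \<le> C"
    and te: "\<And>v. v \<in> V \<Longrightarrow> t v powr q = (\<Sum>w\<in>{w. (v, w) \<in> E}. t w)"
    and se: "\<And>v. v \<in> V \<Longrightarrow> s v powr q = (\<Sum>w\<in>{w. (v, w) \<in> E}. s w)"
    and v: "v \<in> V"
  shows "t v \<le> s v"
proof -
  define L where "L = (SUP u\<in>V. t u / s u)"
  have bdd: "bdd_above ((\<lambda>u. t u / s u) ` V)"
  proof (rule bdd_aboveI2)
    fix u assume "u \<in> V"
    from tb[of u] sb[of u] \<open>u \<in> V\<close> have "t u / s u \<le> t u / 1"
      by (intro divide_left_mono) auto
    with tb[of u] \<open>u \<in> V\<close> show "t u / s u \<le> C" by simp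
  qed
  have up: "t u / s u \<le> L" if "u \<in> V" for u
    unfolding L_def using cSUP_upper[OF that bdd] .
  have tle: "t u \<le> L * s u" if "u \<in> V" for u
    using up[OF that] sb[OF that] by (simp add: divide_le_eq)
  have Lpos: "L > 0"
  proof -
    have "0 < t v / s v" using tb[OF v] sb[OF v] by simp
    thus ?thesis using up[OF v] by linarith
  qed
  have step: "t u / s u \<le> L powr (1/q)" if u: "u \<in> V" for u
  proof -
    have sub: "{w. (u, w) \<in> E} \<subseteq> V" using graph by auto
    have "t u powr q \<le> L * s u powr q"
      unfolding te[OF u] se[OF u] sum_distrib_left
      by (rule sum_mono) (use sub tle in auto)
    hence "(t u powr q) powr (1/q) \<le> (L * s u powr q) powr (1/q)"
      using tb[OF u] q by (intro powr_mono2) auto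
    also have "(t u powr q) powr (1/q) = t u"
      using tb[OF u] q by (simp add: powr_powr)
    also have "(L * s u powr q) powr (1/q) = L powr (1/q) * s u"
      using Lpos sb[OF u] q by (simp add: powr_mult powr_powr)
    finally show ?thesis using sb[OF u] by (simp add: divide_le_eq)
  qed
  have "L \<le> L powr (1/q)"
    unfolding L_def using ne step by (intro cSUP_least) (auto simp: L_def)
  have L1: "L \<le> 1"
  proof (rule ccontr)
    assume "\<not> L \<le> 1"
    hence "L powr (1/q) < L powr 1" using q by (intro powr_less_mono) auto
    with \<open>L \<le> L powr (1/q)\<close> Lpos show False by simp
  qed
  have "L * s v \<le> 1 * s v" using L1 sb[OF v] by (intro mult_right_mono) auto
  thus ?thesis using tle[OF v] by simp
qed

theorem lemma2p1:
  fixes V :: "'a set" and E :: "('a \<times> 'a) set" and M :: nat and q :: real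
  assumes graph: "E \<subseteq> V \<times> V"
    and fin_out: "\<And>v. v \<in> V \<Longrightarrow> finite {w. (v, w) \<in> E}"
    and outdeg: "\<And>v. v \<in> V \<Longrightarrow> card {w. (v, w) \<in> E} \<le> M"
    and out_nonempty: "\<And>v. v \<in> V \<Longrightarrow> \<exists>w. (v, w) \<in> E"
    and q: "q > 1"
  shows "\<exists>!t. t \<in> V \<rightarrow>\<^sub>E {1 .. real M powr (1 / (q - 1))} \<and>
              (\<forall>v\<in>V. t v powr q = (\<Sum>w\<in>{w. (v, w) \<in> E}. t w))"
proof (cases "V = {}")
  case True
  show ?thesis
    by (rule ex1I[of _ "\<lambda>_. undefined"]) (auto simp: True)
next
  case ne: False
  define C where "C = real M powr (1 / (q - 1))"
  define N where "N v = {w. (v, w) \<in> E}" for v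
  have Nsub: "N v \<subseteq> V" for v using graph by (auto simp: N_def)
  have Nfin: "finite (N v)" if "v \<in> V" for v using fin_out[OF that] by (simp add: N_def)
  have Ncard: "1 \<le> card (N v)" if "v \<in> V" for v
    using out_nonempty[OF that] Nfin[OF that] by (auto simp: N_def Suc_le_eq card_gt_0_iff)
  have M1: "1 \<le> M" using ne Ncard outdeg unfolding N_def by (meson equals0I le_trans)
  have C1: "1 \<le> C" unfolding C_def using M1 q by (simp add: ge_one_powr_ge_zero)
  have Cq: "C powr q = M * C"
  proof -
    have "C powr q = real M powr (q / (q - 1))" unfolding C_def by (simp add: powr_powr)
    also have "q / (q - 1) = 1 + 1 / (q - 1)" using q by (simp add: field_simps)
    also have "real M powr (1 + 1 / (q - 1)) = M * C" unfolding C_def using M1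
      by (simp add: powr_add)
    finally show ?thesis .
  qed
  have MCq: "(M * C) powr (1/q) = C"
    using Cq[symmetric] C1 q by (simp add: powr_powr)
  define F where "F f v = (\<Sum>w\<in>N v. f w) powr (1/q)" for f :: "'a \<Rightarrow> real" and v
  have Fbounds: "1 \<le> F f v \<and> F f v \<le> C"
    if v: "v \<in> V" and fb: "\<And>w. w \<in> V \<Longrightarrow> 1 \<le> f w \<and> f w \<le> C" for f v
  proof -
    have "(\<Sum>w\<in>N v. (1::real)) \<le> (\<Sum>w\<in>N v. f w)"
      by (rule sum_mono) (use fb Nsub in auto)
    hence lo: "1 \<le> (\<Sum>w\<in>N v. f w)" using Ncard[OF v] by simp
    have "(\<Sum>w\<in>N v. f w) \<le> (\<Sum>w\<in>N v. C)"
      by (rule sum_mono) (use fb Nsub in auto)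
    also have "\<dots> = card (N v) * C" by simp
    also have "\<dots> \<le> M * C" using outdeg[OF v] C1 unfolding N_def
      by (intro mult_right_mono) auto
    finally have hi: "(\<Sum>w\<in>N v. f w) \<le> M * C" .
    have "1 \<le> F f v" unfolding F_def using lo q by (simp add: ge_one_powr_ge_zero)
    moreover have "F f v \<le> (M * C) powr (1/q)" unfolding F_def
      using lo hi q by (intro powr_mono2) auto
    ultimately show ?thesis using MCq by simp
  qed
  have Fmono: "F f v \<le> F g v"
    if v: "v \<in> V" and fb: "\<And>w. w \<in> V \<Longrightarrow> 1 \<le> f w \<and> f w \<le> g w" for f g v
  proof -
    have "(\<Sum>w\<in>N v. f w) \<le> (\<Sum>w\<in>N v. g w)"
      by (rule sum_mono) (use fb Nsub in auto)
    moreover have "0 \<le> (\<Sum>w\<in>N v. f w)"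
      by (rule sum_nonneg) (use fb Nsub in force)
    ultimately show ?thesis unfolding F_def using q by (intro powr_mono2) auto
  qed
  have Fcong: "F f v = F g v" if "\<And>w. w \<in> V \<Longrightarrow> f w = g w" for f g v
    unfolding F_def using that Nsub by (metis (no_types, lifting) subsetD sum.cong)
  define T where "T = {f. (\<forall>w\<in>V. 1 \<le> f w \<and> f w \<le> C) \<and> (\<forall>w\<in>V. f w \<le> F f w)}"
  have oneT: "(\<lambda>_. 1) \<in> T" unfolding T_def using C1 Fbounds[of _ "\<lambda>_. 1"] C1 by auto
  define t where "t v = (if v \<in> V then (SUP f\<in>T. f v) else undefined)" for v
  have bddT: "bdd_above ((\<lambda>f. f v) ` T)" if "v \<in> V" for v
    using that by (intro bdd_aboveI2[of _ _ C]) (auto simp: T_def)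
  have tup: "f v \<le> t v" if "f \<in> T" "v \<in> V" for f v
    unfolding t_def using cSUP_upper[OF that(1) bddT[OF that(2)]] that by simp
  have tb: "1 \<le> t v \<and> t v \<le> C" if v: "v \<in> V" for v
  proof
    show "1 \<le> t v" using tup[OF oneT v] by simp
    show "t v \<le> C" unfolding t_def using v oneT
      by (auto intro!: cSUP_least simp: T_def)
  qed
  have tleF: "t v \<le> F t v" if v: "v \<in> V" for v
  proof -
    have "f v \<le> F t v" if f: "f \<in> T" for f
    proof -
      have "f v \<le> F f v" using f v by (auto simp: T_def)
      also have "\<dots> \<le> F t v" using f tup by (intro Fmono[OF v]) (auto simp: T_def)
      finally show ?thesis .
    qed
    thus ?thesis unfolding t_def using v oneT by (auto intro!: cSUP_least)
  qed
  define g where "g = restrict (F t) V"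
  have gT: "g \<in> T"
  proof -
    have "\<forall>w\<in>V. 1 \<le> g w \<and> g w \<le> C" unfolding g_def using Fbounds tb by auto
    moreover have "\<forall>w\<in>V. g w \<le> F g w"
    proof
      fix w assume w: "w \<in> V"
      have "F t w \<le> F (F t) w" using tleF tb by (intro Fmono[OF w]) auto
      also have "F (F t) w = F g w" by (rule Fcong) (simp add: g_def)
      finally show "g w \<le> F g w" using w by (simp add: g_def)
    qed
    ultimately show ?thesis unfolding T_def by blast
  qed
  have tfix: "t v = F t v" if v: "v \<in> V" for v
    using tleF[OF v] tup[OF gT v] v by (simp add: g_def)
  have teq: "t v powr q = (\<Sum>w\<in>{w. (v, w) \<in> E}. t w)" if v: "v \<in> V" for v
  proof -
    have "0 \<le> (\<Sum>w\<in>N v. t w)" by (rule sum_nonneg) (use tb Nsub in force)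
    hence "t v powr q = (\<Sum>w\<in>N v. t w)"
      using tfix[OF v] q by (simp add: F_def powr_powr)
    thus ?thesis by (simp add: N_def)
  qed
  show ?thesis
  proof (rule ex1I[of _ t])
    show "t \<in> V \<rightarrow>\<^sub>E {1 .. real M powr (1 / (q - 1))} \<and>
          (\<forall>v\<in>V. t v powr q = (\<Sum>w\<in>{w. (v, w) \<in> E}. t w))"
      using tb teq by (auto simp: t_def C_def)
  next
    fix s assume s: "s \<in> V \<rightarrow>\<^sub>E {1 .. real M powr (1 / (q - 1))} \<and>
          (\<forall>v\<in>V. s v powr q = (\<Sum>w\<in>{w. (v, w) \<in> E}. s w))"
    have sb: "1 \<le> s v \<and> s v \<le> C" if "v \<in> V" for v
      using s that by (auto simp: C_def)
    have tP: "t \<in> V \<rightarrow>\<^sub>E {1 .. real M powr (1 / (q - 1))}"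
      using tb by (auto simp: t_def C_def)
    show "s = t"
    proof (rule PiE_ext[OF conjunct1[OF s] tP])
      fix v assume v: "v \<in> V"
      have "s v \<le> t v"
        by (rule uniq_le[OF graph q ne sb tb _ teq v]) (use s in auto)
      moreover have "t v \<le> s v"
        by (rule uniq_le[OF graph q ne tb sb teq _ v]) (use s in auto)
      ultimately show "s v = t v" by simp
    qed
  qed
qed

end
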